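(* For all $t>0$ and all Borel $V:\mathbb{R}^d\to\mathbb{R}$, $$r_*(V,t/2)\le(4\pi)^{-d/2}\|N(V,t)\|_\infty\le 2\,r_*(V,t/2).$$
   Context: $g(t,x,y)=(4\pi t)^{-d/2}e^{-|y-x|^2/(4t)}$; for $\alpha\in\mathbb{R}^d$, $p_\alpha(t,x,y)=g(t,x-2\alpha t,y)$. $r_*(V,t)=\sup_{\alpha,x\in\mathbb{R}^d}\int_0^t\int_{\mathbb{R}^d}p_\alpha(s,x,z)|V(z)|\,dz\,ds$. $N(V,t,x,y)=\int_0^{t/2}\int_{\mathbb{R}^d}\tau^{-d/2}e^{-|z-y+(\tau/t)(y-x)|^2/(4\tau)}|V(z)|\,dz\,d\tau+\int_{t/2}^t\int_{\mathbb{R}^d}(t-\tau)^{-d/2}e^{-|z-y+(\tau/t)(y-x)|^2/(4(t-\tau))}|V(z)|\,dz\,d\tau$, and $\|N(V,t)\|_\infty=\sup_{x,y\in\mathbb{R}^d}N(V,t,x,y)$. *)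

theory Defs
  imports "HOL-Analysis.Analysis"
begin

definition gauss :: "real \<Rightarrow> 'a::euclidean_space \<Rightarrow> 'a \<Rightarrow> real" where
  "gauss t x y = (4 * pi * t) powr (- real DIM('a) / 2) * exp (- (norm (y - x))\<^sup>2 / (4 * t))"

definition pdrift :: "'a::euclidean_space \<Rightarrow> real \<Rightarrow> 'a \<Rightarrow> 'a \<Rightarrow> real" where
  "pdrift \<alpha> t x y = gauss t (x - (2 * t) *\<^sub>R \<alpha>) y"

definition rstar :: "('a::euclidean_space \<Rightarrow> real) \<Rightarrow> real \<Rightarrow> ennreal" where
  "rstar V t = (SUP (\<alpha>, x) \<in> UNIV.
      \<integral>\<^sup>+ s. indicator {0<..<t} s *
        (\<integral>\<^sup>+ z. ennreal (pdrift \<alpha> s x z * \<bar>V z\<bar>) \<partial>lborel) \<partial>lborel)"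

definition Nfun :: "('a::euclidean_space \<Rightarrow> real) \<Rightarrow> real \<Rightarrow> 'a \<Rightarrow> 'a \<Rightarrow> ennreal" where
  "Nfun V t x y =
     (\<integral>\<^sup>+ \<tau>. indicator {0<..<t/2} \<tau> *
        (\<integral>\<^sup>+ z. ennreal (\<tau> powr (- real DIM('a) / 2) *
             exp (- (norm (z - y + (\<tau> / t) *\<^sub>R (y - x)))\<^sup>2 / (4 * \<tau>)) * \<bar>V z\<bar>) \<partial>lborel) \<partial>lborel)
   + (\<integral>\<^sup>+ \<tau>. indicator {t/2..<t} \<tau> *
        (\<integral>\<^sup>+ z. ennreal ((t - \<tau>) powr (- real DIM('a) / 2) *
             exp (- (norm (z - y + (\<tau> / t) *\<^sub>R (y - x)))\<^sup>2 / (4 * (t - \<tau>))) * \<bar>V z\<bar>) \<partial>lborel) \<partial>lborel)"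

definition Nsup :: "('a::euclidean_space \<Rightarrow> real) \<Rightarrow> real \<Rightarrow> ennreal" where
  "Nsup V t = (SUP (x, y) \<in> UNIV. Nfun V t x y)"

end

theory Submission
  imports Defs
begin

lemma pdrift_split:
  fixes \<alpha> w z :: "'a::euclidean_space"
  assumes "s > 0"
  shows "pdrift \<alpha> s w z = (4 * pi) powr (- real DIM('a) / 2) *
     (s powr (- real DIM('a) / 2) * exp (- (norm (z - w + (2 * s) *\<^sub>R \<alpha>))\<^sup>2 / (4 * s)))"
proof -
  have "(4 * pi * s) powr (- real DIM('a) / 2) = (4 * pi) powr (- real DIM('a) / 2) * s powr (- real DIM('a) / 2)"
    using assms by (simp add: powr_mult)
  moreover have "z - (w - (2 * s) *\<^sub>R \<alpha>) = z - w + (2 * s) *\<^sub>R \<alpha>" by (simp add: algebra_simps)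
  ultimately show ?thesis unfolding pdrift_def gauss_def by (simp only: mult.assoc)
qed

lemma inner_eq:
  fixes V :: "'a::euclidean_space \<Rightarrow> real" and \<alpha> w :: 'a
  assumes "s > 0" and [measurable]: "V \<in> borel_measurable borel"
  shows "(\<integral>\<^sup>+ z. ennreal (pdrift \<alpha> s w z * \<bar>V z\<bar>) \<partial>lborel) =
    ennreal ((4 * pi) powr (- real DIM('a) / 2)) *
    (\<integral>\<^sup>+ z. ennreal (s powr (- real DIM('a) / 2) * exp (- (norm (z - w + (2 * s) *\<^sub>R \<alpha>))\<^sup>2 / (4 * s)) * \<bar>V z\<bar>) \<partial>lborel)"
proof -
  have "(\<integral>\<^sup>+ z. ennreal (pdrift \<alpha> s w z * \<bar>V z\<bar>) \<partial>lborel) =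
    (\<integral>\<^sup>+ z. ennreal ((4 * pi) powr (- real DIM('a) / 2)) * ennreal (s powr (- real DIM('a) / 2) * exp (- (norm (z - w + (2 * s) *\<^sub>R \<alpha>))\<^sup>2 / (4 * s)) * \<bar>V z\<bar>) \<partial>lborel)"
    by (intro nn_integral_cong) (simp add: pdrift_split[OF assms(1)] ennreal_mult[symmetric] mult.assoc)
  also have "\<dots> = ennreal ((4 * pi) powr (- real DIM('a) / 2)) *
    (\<integral>\<^sup>+ z. ennreal (s powr (- real DIM('a) / 2) * exp (- (norm (z - w + (2 * s) *\<^sub>R \<alpha>))\<^sup>2 / (4 * s)) * \<bar>V z\<bar>) \<partial>lborel)"
    by (rule nn_integral_cmult) measurable
  finally show ?thesis .
qed

lemma claimA:
  fixes V :: "'a::euclidean_space \<Rightarrow> real" and x y :: 'a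
  assumes t: "t > 0" and [measurable]: "V \<in> borel_measurable borel"
  shows "ennreal ((4 * pi) powr (- real DIM('a) / 2)) *
     (\<integral>\<^sup>+ \<tau>. indicator {0<..<t/2} \<tau> *
        (\<integral>\<^sup>+ z. ennreal (\<tau> powr (- real DIM('a) / 2) *
             exp (- (norm (z - y + (\<tau> / t) *\<^sub>R (y - x)))\<^sup>2 / (4 * \<tau>)) * \<bar>V z\<bar>) \<partial>lborel) \<partial>lborel)
   = (\<integral>\<^sup>+ s. indicator {0<..<t/2} s *
        (\<integral>\<^sup>+ z. ennreal (pdrift ((1 / (2 * t)) *\<^sub>R (y - x)) s y z * \<bar>V z\<bar>) \<partial>lborel) \<partial>lborel)"
    (is "ennreal ?c * ?L = ?R")
proof -
  have "ennreal ?c * ?L = (\<integral>\<^sup>+ \<tau>. ennreal ?c * (indicator {0<..<t/2} \<tau> *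
        (\<integral>\<^sup>+ z. ennreal (\<tau> powr (- real DIM('a) / 2) *
             exp (- (norm (z - y + (\<tau> / t) *\<^sub>R (y - x)))\<^sup>2 / (4 * \<tau>)) * \<bar>V z\<bar>) \<partial>lborel)) \<partial>lborel)"
    by (rule nn_integral_cmult[symmetric]) measurable
  also have "\<dots> = ?R"
  proof (intro nn_integral_cong)
    fix s :: real
    show "ennreal ?c * (indicator {0<..<t/2} s *
        (\<integral>\<^sup>+ z. ennreal (s powr (- real DIM('a) / 2) *
             exp (- (norm (z - y + (s / t) *\<^sub>R (y - x)))\<^sup>2 / (4 * s)) * \<bar>V z\<bar>) \<partial>lborel)) =
       indicator {0<..<t/2} s *
        (\<integral>\<^sup>+ z. ennreal (pdrift ((1 / (2 * t)) *\<^sub>R (y - x)) s y z * \<bar>V z\<bar>) \<partial>lborel)"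
    proof (cases "s \<in> {0<..<t/2}")
      case True
      then have s: "s > 0" by simp
      have e: "\<And>z. z - y + (2 * s) *\<^sub>R ((1 / (2 * t)) *\<^sub>R (y - x)) = z - y + (s / t) *\<^sub>R (y - x)"
        using t by simp
      show ?thesis using True by (simp add: inner_eq[OF s] e mult.left_commute)
    qed simp
  qed
  finally show ?thesis .
qed

lemma claimB:
  fixes V :: "'a::euclidean_space \<Rightarrow> real" and x y :: 'a
  assumes t: "t > 0" and [measurable]: "V \<in> borel_measurable borel"
  shows "ennreal ((4 * pi) powr (- real DIM('a) / 2)) *
     (\<integral>\<^sup>+ \<tau>. indicator {t/2..<t} \<tau> *
        (\<integral>\<^sup>+ z. ennreal ((t - \<tau>) powr (- real DIM('a) / 2) *
             exp (- (norm (z - y + (\<tau> / t) *\<^sub>R (y - x)))\<^sup>2 / (4 * (t - \<tau>))) * \<bar>V z\<bar>) \<partial>lborel) \<partial>lborel)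
   = (\<integral>\<^sup>+ s. indicator {0<..<t/2} s *
        (\<integral>\<^sup>+ z. ennreal (pdrift ((1 / (2 * t)) *\<^sub>R (x - y)) s x z * \<bar>V z\<bar>) \<partial>lborel) \<partial>lborel)"
    (is "ennreal ?c * ?L = ?R")
proof -
  have "?L = ennreal \<bar>-1\<bar> * (\<integral>\<^sup>+ \<sigma>. indicator {t/2..<t} (t + -1 * \<sigma>) *
        (\<integral>\<^sup>+ z. ennreal ((t - (t + -1 * \<sigma>)) powr (- real DIM('a) / 2) *
             exp (- (norm (z - y + ((t + -1 * \<sigma>) / t) *\<^sub>R (y - x)))\<^sup>2 / (4 * (t - (t + -1 * \<sigma>)))) * \<bar>V z\<bar>) \<partial>lborel) \<partial>lborel)"
  proof -
    have m: "(\<lambda>\<tau>. indicator {t/2..<t} \<tau> *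
        (\<integral>\<^sup>+ z. ennreal ((t - \<tau>) powr (- real DIM('a) / 2) *
             exp (- (norm (z - y + (\<tau> / t) *\<^sub>R (y - x)))\<^sup>2 / (4 * (t - \<tau>))) * \<bar>V z\<bar>) \<partial>lborel) :: ennreal) \<in> borel_measurable borel"
      by measurable
    show ?thesis by (rule nn_integral_real_affine[OF m]) simp
  qed
  also have "\<dots> = (\<integral>\<^sup>+ \<sigma>. indicator {0<..<t/2} \<sigma> *
        (\<integral>\<^sup>+ z. ennreal (\<sigma> powr (- real DIM('a) / 2) *
             exp (- (norm (z - y + ((t - \<sigma>) / t) *\<^sub>R (y - x)))\<^sup>2 / (4 * \<sigma>)) * \<bar>V z\<bar>) \<partial>lborel) \<partial>lborel)"
    apply simp
    apply (intro nn_integral_cong_AE eventually_mono[OF AE_lborel_singleton[of "t/2"]])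
    apply (auto simp: indicator_def)
    done
  finally have L: "?L = \<dots>" .
  have "ennreal ?c * ?L = (\<integral>\<^sup>+ \<sigma>. ennreal ?c * (indicator {0<..<t/2} \<sigma> *
        (\<integral>\<^sup>+ z. ennreal (\<sigma> powr (- real DIM('a) / 2) *
             exp (- (norm (z - y + ((t - \<sigma>) / t) *\<^sub>R (y - x)))\<^sup>2 / (4 * \<sigma>)) * \<bar>V z\<bar>) \<partial>lborel)) \<partial>lborel)"
    unfolding L by (rule nn_integral_cmult[symmetric]) measurable
  also have "\<dots> = ?R"
  proof (intro nn_integral_cong)
    fix s :: real
    show "ennreal ?c * (indicator {0<..<t/2} s *
        (\<integral>\<^sup>+ z. ennreal (s powr (- real DIM('a) / 2) *
             exp (- (norm (z - y + ((t - s) / t) *\<^sub>R (y - x)))\<^sup>2 / (4 * s)) * \<bar>V z\<bar>) \<partial>lborel)) =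
       indicator {0<..<t/2} s *
        (\<integral>\<^sup>+ z. ennreal (pdrift ((1 / (2 * t)) *\<^sub>R (x - y)) s x z * \<bar>V z\<bar>) \<partial>lborel)"
    proof (cases "s \<in> {0<..<t/2}")
      case True
      then have s: "s > 0" by simp
      have q: "(t - s) / t = 1 - s / t" using t by (simp add: field_simps)
      have e: "\<And>z. z - x + (2 * s) *\<^sub>R ((1 / (2 * t)) *\<^sub>R (x - y)) = z - y + ((t - s) / t) *\<^sub>R (y - x)"
        using t unfolding q by (simp add: algebra_simps)
      have e2: "\<And>z. z - x + (s / t) *\<^sub>R (x - y) = z - y + ((t - s) / t) *\<^sub>R (y - x)"
        using e t by simp
      show ?thesis using True by (simp add: inner_eq[OF s] e e2 mult.left_commute)
    qed simp
  qed
  finally show ?thesis .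
qed

theorem lemma2p1:
  fixes V :: "'a::euclidean_space \<Rightarrow> real" and t :: real
  assumes "t > 0" and "V \<in> borel_measurable borel"
  shows "rstar V (t/2) \<le> ennreal ((4 * pi) powr (- real DIM('a) / 2)) * Nsup V t
       \<and> ennreal ((4 * pi) powr (- real DIM('a) / 2)) * Nsup V t \<le> 2 * rstar V (t/2)"
proof -
  define c where "c = ennreal ((4 * pi) powr (- real DIM('a) / 2))"
  define Ir where "Ir = (\<lambda>\<alpha> x. \<integral>\<^sup>+ s. indicator {0<..<t/2} s *
        (\<integral>\<^sup>+ z. ennreal (pdrift \<alpha> s x z * \<bar>V z\<bar>) \<partial>lborel) \<partial>lborel)"
  have rs: "rstar V (t/2) = (SUP (\<alpha>, x) \<in> UNIV. Ir \<alpha> x)"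
    unfolding rstar_def Ir_def by simp
  have cN: "c * Nfun V t x y = Ir ((1 / (2 * t)) *\<^sub>R (y - x)) y + Ir ((1 / (2 * t)) *\<^sub>R (x - y)) x" for x y
    unfolding Nfun_def c_def Ir_def distrib_left
      claimA[OF assms, where x=x and y=y] claimB[OF assms, where x=x and y=y] ..
  have up: "Ir \<alpha> x \<le> rstar V (t/2)" for \<alpha> x
    unfolding rs by (rule SUP_upper2[of "(\<alpha>, x)"]) auto
  have "c * Nsup V t = (SUP (x, y) \<in> UNIV. c * Nfun V t x y)"
    unfolding Nsup_def by (simp add: SUP_mult_left_ennreal split_def)
  also have "\<dots> \<le> 2 * rstar V (t/2)"
  proof (rule SUP_least)
    fix p :: "'a \<times> 'a"
    obtain x y where p: "p = (x, y)" by (cases p)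
    have "c * Nfun V t x y \<le> rstar V (t/2) + rstar V (t/2)"
      unfolding cN by (intro add_mono up)
    then show "(case p of (x, y) \<Rightarrow> c * Nfun V t x y) \<le> 2 * rstar V (t/2)"
      by (simp add: p mult_2)
  qed
  finally have U: "c * Nsup V t \<le> 2 * rstar V (t/2)" .
  have "rstar V (t/2) \<le> c * Nsup V t"
    unfolding rs
  proof (rule SUP_least)
    fix p :: "'a \<times> 'a"
    obtain \<alpha> x where p: "p = (\<alpha>, x)" by (cases p)
    have ex: "(1 / (2 * t)) *\<^sub>R (x - (x - (2 * t) *\<^sub>R \<alpha>)) = \<alpha>" using assms(1) by simp
    have "Ir \<alpha> x \<le> c * Nfun V t (x - (2 * t) *\<^sub>R \<alpha>) x"
      unfolding cN ex by simp
    also have "\<dots> \<le> c * Nsup V t"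
      unfolding Nsup_def by (intro mult_left_mono SUP_upper2[of "(x - (2 * t) *\<^sub>R \<alpha>, x)"]) auto
    finally show "(case p of (\<alpha>, x) \<Rightarrow> Ir \<alpha> x) \<le> c * Nsup V t" by (simp add: p)
  qed
  with U show ?thesis unfolding c_def by simp
qed

end
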